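(* Let $r>0$ and let $\mu:[0,\infty)\to\mathbb R$ and $\sigma:[0,\infty)\to(0,\infty)$ be globally Lipschitz continuous, and suppose there exist constants $\kappa\ge0$ and $c>0$ such that $x\mapsto\mu(x)-(r+c)x$ is strictly increasing on $[\kappa,\infty)$. Let $\psi\in C^2[0,\infty)$ be the non-negative increasing solution of $\frac{\sigma^2(x)}{2}f''(x)+\mu(x)f'(x)=rf(x)$ with $\psi(0)=0$, $\psi'(0)=1$. Then: (I) $\psi'(x)>0$ for all $x\ge0$. (II) There exists a unique point $b_2\in[\kappa,\infty)$ such that $\psi''(x)>0$ for $x\in(\kappa,b_2)$ and $\psi''(x)<0$ for $x\in(b_2,\infty)$. (III) $\psi'(n)\to0$ as $n\to\infty$. *)

theory Defs
  imports "HOL-Analysis.Analysis"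
begin

end

theory Submission imports Defs begin

lemma mvt_le:
  fixes f f' :: "real \<Rightarrow> real"
  assumes "a \<le> b" "continuous_on {a..b} f" "\<And>x. a < x \<Longrightarrow> x < b \<Longrightarrow> DERIV f x :> f' x"
    "\<And>x. a < x \<Longrightarrow> x < b \<Longrightarrow> f' x \<le> B"
  shows "f b - f a \<le> B * (b - a)"
proof (cases "a = b")
  case False
  then have "a < b" using assms by simp
  from MVT[OF this assms(2)] assms(3) obtain l z where "a < z" "z < b" "DERIV f z :> l" "f b - f a = (b - a) * l"
    using real_differentiable_def by metis
  moreover have "l = f' z" using DERIV_unique assms(3) calculation by metis
  moreover have "f' z \<le> B" using assms(4) \<open>a<z\<close> \<open>z<b\<close> by simp
  ultimately show ?thesis using \<open>a<b\<close> by (simp add: mult.commute mult_left_mono)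
qed simp

lemma mvt_ge:
  fixes f f' :: "real \<Rightarrow> real"
  assumes "a \<le> b" "continuous_on {a..b} f" "\<And>x. a < x \<Longrightarrow> x < b \<Longrightarrow> DERIV f x :> f' x"
    "\<And>x. a < x \<Longrightarrow> x < b \<Longrightarrow> B \<le> f' x"
  shows "B * (b - a) \<le> f b - f a"
proof -
  have "(-f) b - (-f) a \<le> (-B) * (b - a)"
    by (rule mvt_le[where f'="\<lambda>x. - f' x"]) (use assms in \<open>auto intro!: derivative_eq_intros continuous_intros\<close>)
  then show ?thesis by simp
qed

lemma mvt_abs:
  fixes f f' :: "real \<Rightarrow> real"
  assumes "a \<le> b" "continuous_on {a..b} f" "\<And>x. a < x \<Longrightarrow> x < b \<Longrightarrow> DERIV f x :> f' x"
    "\<And>x. a < x \<Longrightarrow> x < b \<Longrightarrow> \<bar>f' x\<bar> \<le> B"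
  shows "\<bar>f b - f a\<bar> \<le> B * (b - a)"
proof -
  have 1: "f b - f a \<le> B * (b - a)" using assms by (intro mvt_le[where f'=f']) (auto simp: abs_le_iff)
  have "\<And>x. a<x \<Longrightarrow> x<b \<Longrightarrow> -B \<le> f' x" using assms(4) by (metis abs_le_iff minus_le_iff)
  then have "(-B) * (b - a) \<le> f b - f a" using assms by (intro mvt_ge[where f'=f']) auto
  with 1 show ?thesis by auto
qed

lemma first_zero:
  fixes f :: "real \<Rightarrow> real"
  assumes cont: "continuous_on {a..b} f" and ab: "a \<le> b" and fa: "f a > 0" and fb: "f b \<le> 0"
  shows "\<exists>s. a < s \<and> s \<le> b \<and> f s = 0 \<and> (\<forall>u. a \<le> u \<and> u < s \<longrightarrow> f u > 0)"
proof -
  let ?Z = "{a..b} \<inter> f -` {..0}"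
  have "closed ?Z" by (rule continuous_closed_preimage[OF cont]) auto
  then have "compact ?Z" by (meson bounded_Int bounded_closed_interval compact_eq_bounded_closed)
  moreover have "?Z \<noteq> {}" using ab fb by auto
  ultimately obtain s where s: "s \<in> ?Z" "\<And>y. y \<in> ?Z \<Longrightarrow> s \<le> y"
    using compact_attains_inf[of ?Z] by metis
  have "s \<noteq> a" using s(1) fa by auto
  then have sa: "a < s" using s(1) by auto
  have pos: "\<forall>u. a \<le> u \<and> u < s \<longrightarrow> f u > 0"
  proof (intro allI impI)
    fix u assume u: "a \<le> u \<and> u < s"
    show "f u > 0"
    proof (rule ccontr)
      assume "\<not> f u > 0"
      then have "u \<in> ?Z" using u s(1) by auto
      then show False using s(2) u by force
    qed
  qed
  have "f s = 0"
  proof (rule ccontr)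
    assume "f s \<noteq> 0"
    then have "f s < 0" using s(1) by auto
    have "continuous_on {a..s} f" using s(1) by (intro continuous_on_subset[OF cont]) auto
    from IVT2'[of f s 0 a, OF _ _ _ this] \<open>f s < 0\<close> fa sa
    obtain x where x: "a \<le> x" "x \<le> s" "f x = 0" by auto
    then have "x \<noteq> s" using \<open>f s < 0\<close> by auto
    then show False using pos x by auto
  qed
  then show ?thesis using sa s(1) pos by auto
qed

theorem lemmaA2:
  fixes r c \<kappa> :: real
    and \<mu> \<sigma> \<psi> \<psi>' \<psi>'' :: "real \<Rightarrow> real"
  assumes r_pos: "r > 0"
    and mu_lip: "\<exists>L. L-lipschitz_on {0..} \<mu>"
    and sigma_lip: "\<exists>L. L-lipschitz_on {0..} \<sigma>"
    and sigma_pos: "\<And>x. x \<ge> 0 \<Longrightarrow> \<sigma> x > 0"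
    and kappa: "\<kappa> \<ge> 0" and c_pos: "c > 0"
    and mono_drift: "strict_mono_on {\<kappa>..} (\<lambda>x. \<mu> x - (r + c) * x)"
    and d1: "\<And>x. x \<ge> 0 \<Longrightarrow> (\<psi> has_real_derivative \<psi>' x) (at x within {0..})"
    and d2: "\<And>x. x \<ge> 0 \<Longrightarrow> (\<psi>' has_real_derivative \<psi>'' x) (at x within {0..})"
    and d2_cont: "continuous_on {0..} \<psi>''"
    and ode: "\<And>x. x \<ge> 0 \<Longrightarrow> (\<sigma> x)\<^sup>2 / 2 * \<psi>'' x + \<mu> x * \<psi>' x = r * \<psi> x"
    and nonneg: "\<And>x. x \<ge> 0 \<Longrightarrow> \<psi> x \<ge> 0"
    and incr: "mono_on {0..} \<psi>"
    and init0: "\<psi> 0 = 0" and init1: "\<psi>' 0 = 1"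
  shows "(\<forall>x\<ge>0. \<psi>' x > 0)
    \<and> (\<exists>!b2. b2 \<ge> \<kappa> \<and> (\<forall>x\<in>{\<kappa><..<b2}. \<psi>'' x > 0) \<and> (\<forall>x\<in>{b2<..}. \<psi>'' x < 0))
    \<and> ((\<lambda>n. \<psi>' (real n)) \<longlonglongrightarrow> 0)"
proof -
  have D1: "DERIV \<psi> x :> \<psi>' x" if "x > 0" for x
    using d1[of x] at_within_interior[of x "{0..}"] that by simp
  have D2: "DERIV \<psi>' x :> \<psi>'' x" if "x > 0" for x
    using d2[of x] at_within_interior[of x "{0..}"] that by simp
  have C2: "isCont \<psi>'' x" if "x > 0" for x
    using continuous_on_interior[OF d2_cont, of x] that by simp
  have cont0: "continuous_on {0..} \<psi>"
    unfolding continuous_on_eq_continuous_within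
  proof
    fix x :: real assume "x \<in> {0..}"
    then show "continuous (at x within {0..}) \<psi>" using d1[of x] DERIV_continuous by auto
  qed
  have cont1: "continuous_on {0..} \<psi>'"
    unfolding continuous_on_eq_continuous_within
  proof
    fix x :: real assume "x \<in> {0..}"
    then show "continuous (at x within {0..}) \<psi>'" using d2[of x] DERIV_continuous by auto
  qed
  have psi2: "\<psi>'' x = 2 * (r * \<psi> x - \<mu> x * \<psi>' x) / (\<sigma> x)\<^sup>2" if "x \<ge> 0" for x
  proof -
    have "(\<sigma> x)\<^sup>2 > 0" using sigma_pos[OF that] by simp
    then show ?thesis using ode[OF that] by (simp add: field_simps)
  qed
  have sgn_pos: "\<psi>'' x > 0 \<longleftrightarrow> r * \<psi> x - \<mu> x * \<psi>' x > 0" if "x \<ge> 0" for x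
  proof -
    have "(\<sigma> x)\<^sup>2 > 0" using sigma_pos[OF that] by simp
    then show ?thesis unfolding psi2[OF that] by (simp add: zero_less_divide_iff)
  qed
  have sgn_neg: "\<psi>'' x < 0 \<longleftrightarrow> r * \<psi> x - \<mu> x * \<psi>' x < 0" if "x \<ge> 0" for x
  proof -
    have "(\<sigma> x)\<^sup>2 > 0" using sigma_pos[OF that] by simp
    then show ?thesis unfolding psi2[OF that] by (simp add: divide_less_0_iff)
  qed
  have sgn_zero: "\<psi>'' x = 0 \<longleftrightarrow> r * \<psi> x = \<mu> x * \<psi>' x" if "x \<ge> 0" for x
  proof -
    have "(\<sigma> x)\<^sup>2 > 0" using sigma_pos[OF that] by simp
    then show ?thesis unfolding psi2[OF that] by simp
  qed
  have pos1: "\<psi>' x > 0" if "x \<ge> 0" for x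
  proof (rule ccontr)
    assume "\<not> \<psi>' x > 0"
    then have "\<psi>' x \<le> 0" by simp
    have "continuous_on {0..x} \<psi>'" by (rule continuous_on_subset[OF cont1]) auto
    from first_zero[OF this that _ \<open>\<psi>' x \<le> 0\<close>] init1
    obtain s where s: "0 < s" "\<psi>' s = 0" "\<And>u. 0 \<le> u \<Longrightarrow> u < s \<Longrightarrow> \<psi>' u > 0" by auto
    have "continuous_on {0..s} \<psi>" by (rule continuous_on_subset[OF cont0]) auto
    from MVT[OF s(1) this] obtain l z where z: "0 < z" "z < s" "DERIV \<psi> z :> l" "\<psi> s - \<psi> 0 = (s - 0) * l"
      using D1 real_differentiable_def by (metis order_less_trans)
    have "l = \<psi>' z" using DERIV_unique z(3) D1 z(1) by metis
    then have "\<psi> s > 0" using z init0 s(3)[of z] s(1) by simp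
    then have "\<psi>'' s > 0" using sgn_pos[of s] s r_pos by simp
    from DERIV_pos_inc_left[OF D2[OF s(1)] this] obtain d where d: "d > 0" "\<And>h. h > 0 \<Longrightarrow> h < d \<Longrightarrow> \<psi>' (s - h) < \<psi>' s" by auto
    have "\<psi>' (s - min (d/2) (s/2)) < 0" using d(2)[of "min (d/2) (s/2)"] d(1) s by auto
    moreover have "\<psi>' (s - min (d/2) (s/2)) > 0" using s(3)[of "s - min (d/2) (s/2)"] s(1) d(1) by auto
    ultimately show False by simp
  qed
  have mu_inc: "\<mu> y - \<mu> x > (r + c) * (y - x)" if "\<kappa> \<le> x" "x < y" for x y
  proof -
    have "\<mu> x - (r + c) * x < \<mu> y - (r + c) * y"
      using mono_drift that unfolding strict_mono_on_def by auto
    then show ?thesis by (simp add: algebra_simps)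
  qed
  have near: "\<exists>\<delta>>0. \<delta> \<le> 1 \<and> \<delta> \<le> z - \<kappa> \<and> (\<forall>s. \<bar>s - z\<bar> < \<delta> \<longrightarrow> \<bar>\<psi>'' s\<bar> \<le> \<epsilon>)"
    if z: "z > \<kappa>" and e: "\<epsilon> > 0" and z0: "\<psi>'' z = 0" for z \<epsilon>
  proof -
    have "isCont \<psi>'' z" using C2 z kappa by simp
    then obtain d where d0: "d > 0" "\<forall>y. dist y z < d \<longrightarrow> dist (\<psi>'' y) (\<psi>'' z) < \<epsilon>"
      using e unfolding continuous_at_eps_delta by blast
    then have d: "d > 0" "\<And>s. \<bar>s - z\<bar> < d \<Longrightarrow> \<bar>\<psi>'' s - \<psi>'' z\<bar> < \<epsilon>"
      by (auto simp: dist_real_def)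
    show ?thesis
      by (rule exI[of _ "min d (min 1 (z - \<kappa>))"]) (use d z z0 in \<open>auto simp: less_imp_le\<close>)
  qed
  have cross: "\<exists>\<delta>>0. (\<forall>t. z < t \<and> t < z + \<delta> \<longrightarrow> \<psi>'' t < 0) \<and> (\<forall>t. z - \<delta> < t \<and> t < z \<longrightarrow> \<psi>'' t > 0)"
    if z: "z > \<kappa>" and z0: "\<psi>'' z = 0" for z
  proof -
    define p where "p = \<psi>' z"
    have p: "p > 0" unfolding p_def using pos1 z kappa by simp
    define A where "A = 2 * r + c + \<bar>\<mu> z\<bar> + 1"
    have A: "A > c" "A > 0" unfolding A_def using r_pos c_pos by auto
    define \<epsilon> where "\<epsilon> = c * p / (2 * A)"
    have e: "\<epsilon> > 0" unfolding \<epsilon>_def using A p c_pos by simp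
    have eA: "\<epsilon> * A = c * p / 2" unfolding \<epsilon>_def using A by simp
    have ep: "\<epsilon> < p"
    proof -
      have "c * p < A * p" using A p by (simp add: mult_strict_right_mono)
      moreover have "c * p > 0" using c_pos p by simp
      moreover have "p * A = A * p" by simp
      ultimately have "\<epsilon> * A < p * A" using eA by linarith
      then show ?thesis using A by simp
    qed
    have key: "\<epsilon> * (2 * r + c + \<bar>\<mu> z\<bar>) < c * p"
    proof -
      have "\<epsilon> * (2 * r + c + \<bar>\<mu> z\<bar>) < \<epsilon> * A" unfolding A_def using e by simp
      moreover have "c * p > 0" using c_pos p by simp
      ultimately show ?thesis using eA by linarith
    qed
    from near[OF z e z0] obtain \<delta> where d: "\<delta> > 0" "\<delta> \<le> 1" "\<delta> \<le> z - \<kappa>"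
      "\<And>s. \<bar>s - z\<bar> < \<delta> \<Longrightarrow> \<bar>\<psi>'' s\<bar> \<le> \<epsilon>" by blast
    have gz: "r * \<psi> z = \<mu> z * p" using sgn_zero[of z] z0 z kappa unfolding p_def by simp
    have right: "\<psi>'' t < 0" if t: "z < t" "t < z + \<delta>" for t
    proof -
      have t0: "t \<ge> 0" "z \<ge> 0" using t z kappa by auto
      have dev: "\<bar>\<psi>' s - p\<bar> \<le> \<epsilon> * (s - z)" if s: "z \<le> s" "s \<le> t" for s
        unfolding p_def
        by (rule mvt_abs[where f'=\<psi>'']) (use s t z kappa d in \<open>auto intro!: D2 continuous_on_subset[OF cont1]\<close>)
      have h1: "\<psi>' s \<le> p + \<epsilon>" if s: "z \<le> s" "s \<le> t" for s
      proof -
        have "\<epsilon> * (s - z) \<le> \<epsilon> * 1" using s t d e by (intro mult_left_mono) auto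
        then show ?thesis using dev[OF s] by linarith
      qed
      have h2: "\<psi> t - \<psi> z \<le> (p + \<epsilon>) * (t - z)"
        by (rule mvt_le[where f'=\<psi>']) (use t z kappa h1 in \<open>auto intro!: D1 continuous_on_subset[OF cont0]\<close>)
      have h3: "\<psi>' t \<ge> p - \<epsilon>"
      proof -
        have "\<epsilon> * (t - z) \<le> \<epsilon> * 1" using t d e by (intro mult_left_mono) auto
        then show ?thesis using dev[of t] t by linarith
      qed
      have "(r + c) * (t - z) > 0" using t c_pos r_pos by simp
      have h4: "(\<mu> t - \<mu> z) * \<psi>' t \<ge> ((r + c) * (t - z)) * (p - \<epsilon>)"
        using mu_inc[of z t] t z h3 ep c_pos r_pos \<open>(r + c) * (t - z) > 0\<close>
        by (intro mult_mono; linarith)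
      have h5: "\<mu> z * (\<psi>' t - p) \<ge> - (\<bar>\<mu> z\<bar> * (\<epsilon> * (t - z)))"
      proof -
        have "\<bar>\<mu> z * (\<psi>' t - p)\<bar> \<le> \<bar>\<mu> z\<bar> * (\<epsilon> * (t - z))"
          unfolding abs_mult using dev[of t] t by (intro mult_left_mono) auto
        then show ?thesis by linarith
      qed
      have "r * \<psi> t - \<mu> t * \<psi>' t = r * (\<psi> t - \<psi> z) - (\<mu> t - \<mu> z) * \<psi>' t - \<mu> z * (\<psi>' t - p)"
        using gz by (simp add: algebra_simps)
      also have "\<dots> \<le> r * ((p + \<epsilon>) * (t - z)) - ((r + c) * (t - z)) * (p - \<epsilon>) + \<bar>\<mu> z\<bar> * (\<epsilon> * (t - z))"
        using h2 h4 h5 r_pos by (smt (verit) mult_left_mono)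
      also have "\<dots> = (t - z) * (\<epsilon> * (2 * r + c + \<bar>\<mu> z\<bar>) - c * p)"
        by (simp add: algebra_simps)
      also have "\<dots> < 0" using key t by (simp add: mult_pos_neg)
      finally show ?thesis using sgn_neg t0 by simp
    qed
    have left: "\<psi>'' t > 0" if t: "z - \<delta> < t" "t < z" for t
    proof -
      have t0: "t > \<kappa>" "t \<ge> 0" "z \<ge> 0" using t z kappa d by auto
      have dev: "\<bar>\<psi>' z - \<psi>' s\<bar> \<le> \<epsilon> * (z - s)" if s: "t \<le> s" "s \<le> z" for s
        by (rule mvt_abs[where f'=\<psi>'']) (use s t t0 d in \<open>auto intro!: D2 continuous_on_subset[OF cont1]\<close>)
      have h1: "\<psi>' s \<le> p + \<epsilon>" if s: "t \<le> s" "s \<le> z" for s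
      proof -
        have "\<epsilon> * (z - s) \<le> \<epsilon> * 1" using s t d e by (intro mult_left_mono) auto
        then show ?thesis using dev[OF s] unfolding p_def by linarith
      qed
      have h2: "\<psi> z - \<psi> t \<le> (p + \<epsilon>) * (z - t)"
        by (rule mvt_le[where f'=\<psi>']) (use t t0 h1 in \<open>auto intro!: D1 continuous_on_subset[OF cont0]\<close>)
      have h3: "\<psi>' t \<ge> p - \<epsilon>"
      proof -
        have "\<epsilon> * (z - t) \<le> \<epsilon> * 1" using t d e by (intro mult_left_mono) auto
        then show ?thesis using dev[of t] t unfolding p_def by linarith
      qed
      have "(r + c) * (z - t) > 0" using t c_pos r_pos by simp
      have h4: "(\<mu> z - \<mu> t) * \<psi>' t \<ge> ((r + c) * (z - t)) * (p - \<epsilon>)"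
        using mu_inc[of t z] t t0 h3 ep c_pos r_pos \<open>(r + c) * (z - t) > 0\<close>
        by (intro mult_mono; linarith)
      have h5: "\<mu> z * (p - \<psi>' t) \<ge> - (\<bar>\<mu> z\<bar> * (\<epsilon> * (z - t)))"
      proof -
        have "\<bar>\<mu> z * (p - \<psi>' t)\<bar> \<le> \<bar>\<mu> z\<bar> * (\<epsilon> * (z - t))"
          unfolding abs_mult p_def using dev[of t] t by (intro mult_left_mono) auto
        then show ?thesis by linarith
      qed
      have "(z - t) * (c * p - \<epsilon> * (2 * r + c + \<bar>\<mu> z\<bar>)) > 0" using key t by simp
      also have "(z - t) * (c * p - \<epsilon> * (2 * r + c + \<bar>\<mu> z\<bar>)) =
          - (r * ((p + \<epsilon>) * (z - t))) + ((r + c) * (z - t)) * (p - \<epsilon>) - \<bar>\<mu> z\<bar> * (\<epsilon> * (z - t))"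
        by (simp add: algebra_simps)
      also have "\<dots> \<le> - (r * (\<psi> z - \<psi> t)) + (\<mu> z - \<mu> t) * \<psi>' t + \<mu> z * (p - \<psi>' t)"
      proof -
        have "r * (\<psi> z - \<psi> t) \<le> r * ((p + \<epsilon>) * (z - t))" using h2 r_pos by (intro mult_left_mono) auto
        then show ?thesis using h4 h5 by linarith
      qed
      also have "\<dots> = r * \<psi> t - \<mu> t * \<psi>' t"
        using gz by (simp add: algebra_simps)
      finally show ?thesis using sgn_pos t0 by simp
    qed
    show ?thesis using d(1) right left by blast
  qed
  have cont2: "continuous_on {a..b} \<psi>''" if "a \<ge> 0" for a b
    by (rule continuous_on_subset[OF d2_cont]) (use that in auto)
  have Pneg: "\<psi>'' t < 0" if z: "z > \<kappa>" "\<psi>'' z < 0" and t: "t > z" for z t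
  proof (rule ccontr)
    assume "\<not> \<psi>'' t < 0"
    then have "- \<psi>'' t \<le> 0" by simp
    have "continuous_on {z..t} (\<lambda>x. - \<psi>'' x)"
      using cont2[of z t] z kappa by (intro continuous_intros) auto
    from first_zero[OF this _ _ \<open>- \<psi>'' t \<le> 0\<close>] z t
    obtain s where s: "z < s" "s \<le> t" "\<psi>'' s = 0" "\<And>u. z \<le> u \<Longrightarrow> u < s \<Longrightarrow> \<psi>'' u < 0" by auto
    from cross[of s] s z obtain \<delta> where d: "\<delta> > 0" "\<And>u. s - \<delta> < u \<Longrightarrow> u < s \<Longrightarrow> \<psi>'' u > 0" by auto
    define u where "u = max z (s - \<delta>/2)"
    have "s - \<delta> < u" "u < s" "z \<le> u" unfolding u_def using d s by auto
    then show False using d(2) s(4) by fastforce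
  qed
  have Pnonpos: "\<psi>'' t < 0" if z: "z > \<kappa>" "\<psi>'' z \<le> 0" and t: "t > z" for z t
  proof (cases "\<psi>'' z < 0")
    case True
    then show ?thesis using Pneg z t by blast
  next
    case False
    then have "\<psi>'' z = 0" using z by simp
    from cross[OF z(1) this] obtain \<delta> where d: "\<delta> > 0" "\<And>u. z < u \<Longrightarrow> u < z + \<delta> \<Longrightarrow> \<psi>'' u < 0" by auto
    define z' where "z' = (z + min t (z + \<delta>)) / 2"
    have "z < z'" "z' < t" "z' < z + \<delta>" unfolding z'_def using d t by auto
    then show ?thesis using Pneg[of z' t] d(2)[of z'] z by auto
  qed
  have notconvex: "\<exists>x>\<kappa>. \<psi>'' x \<le> 0"
  proof (rule ccontr)
    assume "\<not> ?thesis"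
    then have cvx: "\<And>x. x > \<kappa> \<Longrightarrow> \<psi>'' x > 0" by force
    define a where "a = \<kappa> + 1"
    have a: "a > \<kappa>" "a > 0" unfolding a_def using kappa by auto
    have pa: "\<psi>' a > 0" using pos1 a by simp
    define M where "M = \<bar>\<mu> \<kappa>\<bar> + r * \<psi> a / \<psi>' a"
    define x where "x = \<kappa> + 2 + M / c"
    have M: "M \<ge> 0" unfolding M_def using r_pos pa nonneg[of a] a by simp
    have "M / c \<ge> 0" using M c_pos by simp
    then have xa: "x > a" unfolding x_def a_def by simp
    have mono1: "\<psi>' s \<le> \<psi>' x" if "a \<le> s" "s \<le> x" for s
      using mvt_ge[of s x \<psi>' \<psi>'' 0] that a cont1 cvx
      by (smt (verit, best) D2 atLeastAtMost_iff atLeast_iff continuous_on_subset subsetI mult_zero_left)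
    have h1: "\<psi> x - \<psi> a \<le> \<psi>' x * (x - a)"
      by (rule mvt_le[where f'=\<psi>']) (use xa a mono1 in \<open>auto intro!: D1 continuous_on_subset[OF cont0]\<close>)
    have h2: "r * \<psi> x > \<mu> x * \<psi>' x" using cvx[of x] sgn_pos[of x] xa a by simp
    have h3: "\<mu> x \<ge> \<mu> \<kappa> + (r + c) * (x - \<kappa>)" using mu_inc[of \<kappa> x] xa a by simp
    have px: "\<psi>' x \<ge> \<psi>' a" using mono1[of a] xa by simp
    have br: "\<mu> \<kappa> + c * (x - \<kappa>) + r \<ge> r * \<psi> a / \<psi>' a"
    proof -
      have "c * (x - \<kappa>) = 2 * c + M" unfolding x_def using c_pos by (simp add: field_simps)
      then show ?thesis unfolding M_def using c_pos r_pos by linarith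
    qed
    have "r * \<psi> a > \<psi>' a * (\<mu> \<kappa> + c * (x - \<kappa>) + r)"
    proof -
      have "r * \<psi> a + r * (\<psi>' x * (x - a)) \<ge> r * \<psi> x" using h1 r_pos
        by (smt (verit) mult_left_mono right_diff_distrib)
      moreover have "\<mu> x * \<psi>' x \<ge> (\<mu> \<kappa> + (r + c) * (x - \<kappa>)) * \<psi>' x"
        using h3 pa px by (intro mult_right_mono) auto
      ultimately have e1: "r * \<psi> a > \<psi>' x * (\<mu> \<kappa> + (r + c) * (x - \<kappa>) - r * (x - a))"
        using h2 by (simp add: algebra_simps)
      have "\<mu> \<kappa> + (r + c) * (x - \<kappa>) - r * (x - a) = \<mu> \<kappa> + c * (x - \<kappa>) + r"
        unfolding a_def by (simp add: algebra_simps)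
      with e1 have "r * \<psi> a > \<psi>' x * (\<mu> \<kappa> + c * (x - \<kappa>) + r)" by simp
      moreover have "\<psi>' x * (\<mu> \<kappa> + c * (x - \<kappa>) + r) \<ge> \<psi>' a * (\<mu> \<kappa> + c * (x - \<kappa>) + r)"
      proof -
        have "r * \<psi> a / \<psi>' a \<ge> 0" using r_pos pa nonneg[of a] a by simp
        then show ?thesis using br px by (intro mult_right_mono) auto
      qed
      ultimately show ?thesis by linarith
    qed
    moreover have "\<psi>' a * (\<mu> \<kappa> + c * (x - \<kappa>) + r) \<ge> \<psi>' a * (r * \<psi> a / \<psi>' a)"
      using br pa by (intro mult_left_mono) auto
    moreover have "\<psi>' a * (r * \<psi> a / \<psi>' a) = r * \<psi> a" using pa by simp
    ultimately show False by linarith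
  qed
  define N where "N = {x. \<kappa> < x \<and> \<psi>'' x \<le> 0}"
  have Nne: "N \<noteq> {}" using notconvex unfolding N_def by auto
  have Nbdd: "bdd_below N" unfolding N_def bdd_below_def by (rule exI[of _ \<kappa>]) auto
  define b2 where "b2 = Inf N"
  have b2k: "b2 \<ge> \<kappa>" unfolding b2_def N_def using Nne[unfolded N_def] by (intro cInf_greatest) auto
  have after: "\<psi>'' x < 0" if "x > b2" for x
  proof -
    have "Inf N < x" using that unfolding b2_def .
    then obtain n where "n \<in> N" "n < x" using cInf_lessD[OF Nne, of x] by blast
    then show ?thesis using Pnonpos[of n x] unfolding N_def by auto
  qed
  have before: "\<psi>'' x > 0" if "\<kappa> < x" "x < b2" for x
  proof (rule ccontr)
    assume "\<not> \<psi>'' x > 0"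
    then have "x \<in> N" unfolding N_def using that by auto
    then have "b2 \<le> x" unfolding b2_def using Nbdd by (rule cInf_lower)
    then show False using that by simp
  qed
  have II: "\<exists>!b2. b2 \<ge> \<kappa> \<and> (\<forall>x\<in>{\<kappa><..<b2}. \<psi>'' x > 0) \<and> (\<forall>x\<in>{b2<..}. \<psi>'' x < 0)"
  proof (rule ex1I[of _ b2])
    show "b2 \<ge> \<kappa> \<and> (\<forall>x\<in>{\<kappa><..<b2}. \<psi>'' x > 0) \<and> (\<forall>x\<in>{b2<..}. \<psi>'' x < 0)"
      using b2k before after by auto
  next
    fix b assume b: "b \<ge> \<kappa> \<and> (\<forall>x\<in>{\<kappa><..<b}. \<psi>'' x > 0) \<and> (\<forall>x\<in>{b<..}. \<psi>'' x < 0)"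
    show "b = b2"
    proof (rule ccontr)
      assume "b \<noteq> b2"
      then consider "b < b2" | "b2 < b" by linarith
      then show False
      proof cases
        case 1
        define x where "x = (b + b2) / 2"
        have "\<kappa> < x" "x < b2" "x > b" unfolding x_def using 1 b by auto
        then show False using before[of x] b by force
      next
        case 2
        define x where "x = (b + b2) / 2"
        have "\<kappa> < x" "x < b" "x > b2" unfolding x_def using 2 b2k by auto
        then show False using after[of x] b by force
      qed
    qed
  qed
  define a0 where "a0 = b2 + 1"
  have a0: "a0 > \<kappa>" "a0 > 0" unfolding a0_def using b2k kappa by auto
  have dec: "\<psi>' y \<le> \<psi>' x" if "a0 \<le> x" "x \<le> y" for x y
  proof -
    have "\<psi>' y - \<psi>' x \<le> 0 * (y - x)"
      by (rule mvt_le[where f'=\<psi>'']) (use that a0 in \<open>auto intro!: D2 continuous_on_subset[OF cont1] less_imp_le[OF after] simp: a0_def\<close>)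
    then show ?thesis by simp
  qed
  define L where "L = Inf (\<psi>' ` {a0..})"
  have Lne: "\<psi>' ` {a0..} \<noteq> {}" by auto
  have Lbdd: "bdd_below (\<psi>' ` {a0..})"
    unfolding bdd_below_def using pos1 a0 by (intro exI[of _ 0]) (auto intro: less_imp_le)
  have Lle: "L \<le> \<psi>' x" if "x \<ge> a0" for x
    unfolding L_def using Lbdd that by (intro cInf_lower) auto
  have L0: "L \<le> 0"
  proof (rule ccontr)
    assume "\<not> L \<le> 0"
    then have Lp: "L > 0" by simp
    define \<eta> where "\<eta> = c * L / (2 * r)"
    have eta: "\<eta> > 0" "r * (L + \<eta>) = r * L + c * L / 2" unfolding \<eta>_def using Lp c_pos r_pos by (auto simp: field_simps)
    have "L < L + \<eta>" using eta by simp
    then obtain y where "y \<in> \<psi>' ` {a0..}" "y < L + \<eta>" using cInf_lessD[OF Lne] unfolding L_def by blast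
    then obtain a where a: "a \<ge> a0" "\<psi>' a < L + \<eta>" by auto
    have a1: "a > \<kappa>" "a > 0" using a a0 by auto
    have hpsi: "\<psi> x - \<psi> a \<le> (L + \<eta>) * (x - a)" if "x \<ge> a" for x
      by (rule mvt_le[where f'=\<psi>']) (use that a a1 dec[of a] in \<open>auto intro!: D1 continuous_on_subset[OF cont0] simp: less_imp_le intro: order_trans[OF _ less_imp_le[OF a(2)]]\<close>)
    obtain K where K: "K-lipschitz_on {0..} \<sigma>" using sigma_lip by blast
    have K0: "K \<ge> 0" using lipschitz_on_nonneg[OF K] .
    define S where "S = \<sigma> 0 + K"
    have S: "S > 0" unfolding S_def using sigma_pos[of 0] K0 by simp
    have sig: "\<sigma> x \<le> S * x" if "x \<ge> 1" for x
    proof -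
      have "dist (\<sigma> x) (\<sigma> 0) \<le> K * dist x 0" using lipschitz_onD[OF K, of x 0] that by simp
      then have "\<sigma> x \<le> \<sigma> 0 + K * x" using that by (simp add: dist_real_def abs_le_iff)
      also have "\<dots> \<le> \<sigma> 0 * x + K * x" using sigma_pos[of 0] that by simp
      finally show ?thesis unfolding S_def by (simp add: algebra_simps)
    qed
    define C0 where "C0 = (\<mu> \<kappa> - (r + c) * \<kappa>) * L - r * \<psi> a"
    define X where "X = max a (max 1 (max (4 * \<bar>C0\<bar> / (c * L)) (\<kappa> + \<bar>\<mu> \<kappa>\<bar> / (r + c))))"
    have X: "X \<ge> a" "X \<ge> 1" "X \<ge> 4 * \<bar>C0\<bar> / (c * L)" "X \<ge> \<kappa> + \<bar>\<mu> \<kappa>\<bar> / (r + c)"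
      unfolding X_def by (simp_all add: le_max_iff_disj)
    define \<beta> where "\<beta> = c * L / (2 * S\<^sup>2)"
    have beta: "\<beta> > 0" unfolding \<beta>_def using c_pos Lp S by simp
    have bound: "\<psi>'' x \<le> - (\<beta> / x)" if x: "x \<ge> X" for x
    proof -
      have x0: "x > 0" "x \<ge> 1" "x \<ge> a" "x > \<kappa>" using x X a1 by auto
      have "(r + c) * (x - \<kappa>) \<ge> (r + c) * (\<bar>\<mu> \<kappa>\<bar> / (r + c))"
        using x X(4) r_pos c_pos by (intro mult_left_mono) auto
      then have "(r + c) * (x - \<kappa>) \<ge> \<bar>\<mu> \<kappa>\<bar>" using r_pos c_pos by simp
      moreover have mx: "\<mu> x \<ge> \<mu> \<kappa> + (r + c) * (x - \<kappa>)" using mu_inc[of \<kappa> x] x0 by simp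
      ultimately have mx0: "\<mu> \<kappa> + (r + c) * (x - \<kappa>) \<ge> 0" by linarith
      have "\<mu> x * \<psi>' x \<ge> \<mu> x * L" using Lle[of x] x0 a mx mx0 by (intro mult_left_mono) auto
      moreover have "\<mu> x * L \<ge> (\<mu> \<kappa> + (r + c) * (x - \<kappa>)) * L" using mx Lp by (intro mult_right_mono) auto
      moreover have "r * \<psi> x \<le> r * \<psi> a + (r * L + c * L / 2) * x"
      proof -
        have "r * (\<psi> x - \<psi> a) \<le> r * ((L + \<eta>) * (x - a))" using hpsi[of x] x0 r_pos by (intro mult_left_mono) auto
        moreover have la: "(L + \<eta>) * (x - a) \<le> (L + \<eta>) * x" using a1 Lp eta by (intro mult_left_mono) auto
        have "r * ((L + \<eta>) * (x - a)) \<le> r * ((L + \<eta>) * x)" by (rule mult_left_mono[OF la]) (use r_pos in simp)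
        ultimately have "r * \<psi> x - r * \<psi> a \<le> r * ((L + \<eta>) * x)" by (simp add: right_diff_distrib)
        moreover have "r * ((L + \<eta>) * x) = (r * L + c * L / 2) * x" using eta(2) by (metis mult.assoc)
        ultimately show ?thesis by linarith
      qed
      ultimately have D: "\<mu> x * \<psi>' x - r * \<psi> x \<ge> c * L * x / 2 + C0"
        unfolding C0_def by (simp add: algebra_simps)
      have "c * L * x / 4 \<ge> c * L * (4 * \<bar>C0\<bar> / (c * L)) / 4"
        using x X(3) c_pos Lp by (intro divide_right_mono mult_left_mono) auto
      then have "c * L * x / 4 \<ge> \<bar>C0\<bar>" using c_pos Lp by simp
      with D have D2': "\<mu> x * \<psi>' x - r * \<psi> x \<ge> c * L * x / 4" by linarith
      have sp: "(\<sigma> x)\<^sup>2 > 0" using sigma_pos[of x] x0 by simp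
      have ss: "(\<sigma> x)\<^sup>2 \<le> S\<^sup>2 * x\<^sup>2"
      proof -
        have "(\<sigma> x)\<^sup>2 \<le> (S * x)\<^sup>2" using sig[of x] x0 sigma_pos[of x] by (intro power_mono) auto
        then show ?thesis by (simp add: power_mult_distrib)
      qed
      have "(c * L * x / 2) / (S\<^sup>2 * x\<^sup>2) \<le> (2 * (\<mu> x * \<psi>' x - r * \<psi> x)) / (\<sigma> x)\<^sup>2"
      proof (rule frac_le)
        have "c * L * x > 0" using c_pos Lp x0 by simp
        moreover have gen: "\<And>A B::real. 0 < A \<Longrightarrow> A / 4 \<le> B \<Longrightarrow> 0 \<le> 2 * B \<and> A / 2 \<le> 2 * B" by linarith
        ultimately show "0 \<le> 2 * (\<mu> x * \<psi>' x - r * \<psi> x)" "c * L * x / 2 \<le> 2 * (\<mu> x * \<psi>' x - r * \<psi> x)"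
          using D2' by blast+
      qed (use sp ss in auto)
      moreover have "(c * L * x / 2) / (S\<^sup>2 * x\<^sup>2) = \<beta> / x"
        unfolding \<beta>_def using x0 S by (simp add: field_simps power2_eq_square)
      moreover have "\<psi>'' x = - ((2 * (\<mu> x * \<psi>' x - r * \<psi> x)) / (\<sigma> x)\<^sup>2)"
        using psi2[of x] x0 sp by (simp add: field_simps)
      ultimately show ?thesis by linarith
    qed
    define k where "k = \<psi>' X / \<beta> + 1"
    define Y where "Y = X * exp k"
    have X0: "X > 0" using X by simp
    have "\<psi>' X / \<beta> > 0" using pos1[of X] X0 beta by simp
    then have k0: "k > 0" unfolding k_def by simp
    have XY: "X \<le> Y" unfolding Y_def using X0 k0 by simp
    have lnY: "ln Y = ln X + k" unfolding Y_def using X0 by (simp add: ln_mult)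
    have derF: "DERIV (\<lambda>y. \<psi>' y + \<beta> * ln y) y :> \<psi>'' y + \<beta> * inverse y" if "y > 0" for y
      using that D2[OF that] by (auto intro!: derivative_eq_intros simp: divide_inverse)
    have "(\<psi>' Y + \<beta> * ln Y) - (\<psi>' X + \<beta> * ln X) \<le> 0 * (Y - X)"
    proof (rule mvt_le[where f'="\<lambda>y. \<psi>'' y + \<beta> * inverse y"])
      show "X \<le> Y" by (rule XY)
      show "continuous_on {X..Y} (\<lambda>y. \<psi>' y + \<beta> * ln y)"
      proof (intro continuous_at_imp_continuous_on ballI)
        fix y assume "y \<in> {X..Y}"
        then have "y > 0" using X0 by simp
        from DERIV_isCont[OF derF[OF this]] show "isCont (\<lambda>y. \<psi>' y + \<beta> * ln y) y" .
      qed
      show "DERIV (\<lambda>y. \<psi>' y + \<beta> * ln y) y :> \<psi>'' y + \<beta> * inverse y" if "X < y" "y < Y" for y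
        using derF that X0 by simp
      show "\<psi>'' y + \<beta> * inverse y \<le> 0" if "X < y" "y < Y" for y
        using bound[of y] that by (simp add: divide_inverse)
    qed
    then have "\<psi>' Y \<le> \<psi>' X - \<beta> * k" using lnY by (simp add: algebra_simps)
    also have "\<dots> = - \<beta>" unfolding k_def using beta by (simp add: field_simps)
    finally have "\<psi>' Y < 0" using beta by simp
    then show False using pos1[of Y] XY X0 by simp
  qed
  have III: "(\<lambda>n. \<psi>' (real n)) \<longlonglongrightarrow> 0"
  proof (rule LIMSEQ_I)
    fix e :: real assume e: "e > 0"
    then have "L < e" using L0 by simp
    then obtain y where y: "y \<in> \<psi>' ` {a0..}" "y < e" using cInf_lessD[OF Lne] unfolding L_def by blast
    then obtain a where a: "a \<ge> a0" "\<psi>' a < e" by auto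
    show "\<exists>no. \<forall>n\<ge>no. norm (\<psi>' (real n) - 0) < e"
    proof (intro exI allI impI)
      fix n assume "n \<ge> nat \<lceil>a\<rceil>"
      then have "real n \<ge> a" by linarith
      then have "\<psi>' (real n) \<le> \<psi>' a" "\<psi>' (real n) > 0" using dec[of a "real n"] a pos1[of "real n"] by auto
      then show "norm (\<psi>' (real n) - 0) < e" using a by simp
    qed
  qed
  show ?thesis using pos1 II III by auto
qed

end
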